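(* Let $k\geq 3$ be an integer. Then every hypomatchable graph $G$ with $|V(G)|\geq 2k+1$ that has no $\{P_{2},P_{2k+1}\}$-factor contains a set $X\subseteq V(G)$ with $|X|\geq 5$ such that $$\sum_{0\leq j\leq k-1} c_{2j+1}(G-X)\geq \frac{1}{k^{2}}|X|.$$ In other words, $\left(\frac{1}{k^{2}},5\right)$ is a $(k,\{P_{2},P_{2k+1}\})$-good pair.
   Context: A graph $H$ is hypomatchable if $H-u$ has a perfect matching for every $u\in V(H)$. For a graph $H$ and $j\geq 1$, $c_{j}(H)$ is the number of components of $H$ with exactly $j$ vertices. For an integer $k\geq 1$ and a set $\mathcal{F}$ of connected graphs with $P_2\in\mathcal{F}$, a pair $(\varepsilon,\lambda)$ with $\varepsilon>0$ real and $\lambda$ a positive integer is called $(k,\mathcal{F})$-good if every hypomatchable graph $G$ of order at least $2k+1$ having no $\mathcal{F}$-factor has a set $X\subseteq V(G)$ with $|X|\geq\lambda$ and $\sum_{0\leq j\leq k-1}c_{2j+1}(G-X)\geq \varepsilon|X|$. An $\mathcal{F}$-factor is a spanning subgraph each of whose components is isomorphic to a member of $\mathcal{F}$. *)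

theory Defs
  imports Complex_Main
begin

definition simple_graph :: "'a set \<Rightarrow> 'a set set \<Rightarrow> bool" where
  "simple_graph V E \<longleftrightarrow> finite V \<and> (\<forall>e\<in>E. e \<subseteq> V \<and> card e = 2)"

definition del_verts_E :: "'a set \<Rightarrow> 'a set set \<Rightarrow> 'a set set" where
  "del_verts_E X E = {e \<in> E. e \<inter> X = {}}"

definition perfect_matching :: "'a set \<Rightarrow> 'a set set \<Rightarrow> 'a set set \<Rightarrow> bool" where
  "perfect_matching V E M \<longleftrightarrow> M \<subseteq> E \<and> (\<forall>v\<in>V. \<exists>!e. e \<in> M \<and> v \<in> e)"

definition hypomatchable :: "'a set \<Rightarrow> 'a set set \<Rightarrow> bool" where
  "hypomatchable V E \<longleftrightarrow>
     (\<forall>u\<in>V. \<exists>M. perfect_matching (V - {u}) (del_verts_E {u} E) M)"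

definition adj :: "'a set set \<Rightarrow> 'a \<Rightarrow> 'a \<Rightarrow> bool" where
  "adj E x y \<longleftrightarrow> {x, y} \<in> E"

definition components :: "'a set \<Rightarrow> 'a set set \<Rightarrow> 'a set set" where
  "components V E = {{y \<in> V. (adj E)\<^sup>*\<^sup>* x y} | x. x \<in> V}"

definition comp_count :: "nat \<Rightarrow> 'a set \<Rightarrow> 'a set set \<Rightarrow> nat" where
  "comp_count j V E = card {C \<in> components V E. card C = j}"

definition is_path_on :: "nat \<Rightarrow> 'a set \<Rightarrow> 'a set set \<Rightarrow> bool" where
  "is_path_on n C F \<longleftrightarrow> (\<exists>vs. distinct vs \<and> set vs = C \<and> length vs = n \<and>
      F = {{vs ! i, vs ! Suc i} | i. Suc i < n})"

definition has_path_factor :: "nat \<Rightarrow> 'a set \<Rightarrow> 'a set set \<Rightarrow> bool" where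
  "has_path_factor k V E \<longleftrightarrow> (\<exists>F. F \<subseteq> E \<and>
     (\<forall>C\<in>components V F. is_path_on 2 C {e \<in> F. e \<subseteq> C}
                          \<or> is_path_on (2*k+1) C {e \<in> F. e \<subseteq> C}))"

end

theory Submission
  imports Defs begin
fun pe :: "'a list \<Rightarrow> 'a set set" where
  "pe (a#b#rest) = insert {a,b} (pe (b#rest))" | "pe _ = {}"

lemma pe_nth: "pe vs = {{vs!i, vs!Suc i} | i. Suc i < length vs}"
proof (induction vs rule: pe.induct)
  case (1 a b rest)
  have "{{(a#b#rest)!i, (a#b#rest)!Suc i} | i. Suc i < length (a#b#rest)}
      = insert {a,b} {{(b#rest)!i, (b#rest)!Suc i} | i. Suc i < length (b#rest)}"
  proof (rule set_eqI, rule iffI)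
    fix e assume "e \<in> {{(a#b#rest)!i, (a#b#rest)!Suc i} | i. Suc i < length (a#b#rest)}"
    then obtain i where "e = {(a#b#rest)!i, (a#b#rest)!Suc i}" "Suc i < length (a#b#rest)" by blast
    then show "e \<in> insert {a,b} {{(b#rest)!i, (b#rest)!Suc i} | i. Suc i < length (b#rest)}"
      by (cases i) auto
  next
    fix e assume "e \<in> insert {a,b} {{(b#rest)!i, (b#rest)!Suc i} | i. Suc i < length (b#rest)}"
    then show "e \<in> {{(a#b#rest)!i, (a#b#rest)!Suc i} | i. Suc i < length (a#b#rest)}"
    proof
      assume "e = {a,b}" then show ?thesis by (auto intro!: exI[of _ 0])
    next
      assume "e \<in> {{(b#rest)!i, (b#rest)!Suc i} | i. Suc i < length (b#rest)}"
      then obtain i where "e = {(b#rest)!i, (b#rest)!Suc i}" "Suc i < length (b#rest)" by blast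
      then show ?thesis by (auto intro!: exI[of _ "Suc i"])
    qed
  qed
  then show ?case using 1 by simp
qed auto

lemma pe_subset: "e \<in> pe vs \<Longrightarrow> e \<subseteq> set vs"
  by (induction vs rule: pe.induct) auto

lemma pe_snoc: "vs \<noteq> [] \<Longrightarrow> pe (vs @ [x]) = insert {last vs, x} (pe vs)"
  by (induction vs rule: pe.induct) auto

lemma pe_conn: "vs \<noteq> [] \<Longrightarrow> p \<in> set vs \<Longrightarrow> (\<lambda>a b. {a,b} \<in> pe vs)\<^sup>*\<^sup>* (hd vs) p"
proof (induction vs arbitrary: p rule: pe.induct)
  case (1 a b rest)
  show ?case
  proof (cases "p = a")
    case True then show ?thesis by simp
  next
    case False
    then have "p \<in> set (b#rest)" using 1 by simp
    then have "(\<lambda>x y. {x,y} \<in> pe (b#rest))\<^sup>*\<^sup>* b p" using "1.IH"[of p] by simp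
    then have "(\<lambda>x y. {x,y} \<in> pe (a#b#rest))\<^sup>*\<^sup>* b p"
      by (rule rtranclp_mono[THEN predicate2D, rotated]) auto
    moreover have "{a,b} \<in> pe (a#b#rest)" by simp
    ultimately show ?thesis by (metis (no_types, lifting) converse_rtranclp_into_rtranclp list.sel(1))
  qed
qed auto

lemma reach_closed:
  assumes "R\<^sup>*\<^sup>* x y" "x \<in> S" "\<And>a b. a \<in> S \<Longrightarrow> R a b \<Longrightarrow> b \<in> S"
  shows "y \<in> S"
  using assms(1,2) by (induction rule: rtranclp_induct) (auto intro: assms(3))

lemma adj_sym_rtrancl: "(adj F)\<^sup>*\<^sup>* x y \<Longrightarrow> (adj F)\<^sup>*\<^sup>* y x"
proof -
  assume "(adj F)\<^sup>*\<^sup>* x y"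
  then have "(adj F)\<inverse>\<inverse>\<^sup>*\<^sup>* y x" by (rule rtranclp_converseI)
  moreover have "(adj F)\<inverse>\<inverse> = adj F" by (auto simp: adj_def insert_commute fun_eq_iff)
  ultimately show ?thesis by simp
qed

locale hm =
  fixes V :: "'a set" and E :: "'a set set" and M :: "'a set set" and v :: 'a
  assumes sg: "simple_graph V E" and vV: "v \<in> V" and ME: "M \<subseteq> E"
    and Mv: "\<And>e. e \<in> M \<Longrightarrow> v \<notin> e"
    and Mu: "\<And>u. u \<in> V - {v} \<Longrightarrow> \<exists>!e. e \<in> M \<and> u \<in> e"
begin

definition alt where
  "alt vs \<longleftrightarrow> distinct vs \<and> set vs \<subseteq> V \<and> vs \<noteq> [] \<and> hd vs = v \<and> pe vs \<subseteq> E
     \<and> (\<forall>u\<in>set vs - {v}. \<exists>w\<in>set vs. {u,w} \<in> M)"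

lemma edgeE: "e \<in> E \<Longrightarrow> e \<subseteq> V \<and> card e = 2"
  using sg by (auto simp: simple_graph_def)

lemma Medge: assumes "e \<in> M" "x \<in> e" obtains y where "e = {x,y}" "x \<noteq> y" "y \<in> V" "x \<in> V"
proof -
  have "e \<subseteq> V" "card e = 2" using edgeE assms ME by auto
  then obtain a b where ab: "e = {a,b}" "a \<noteq> b" by (auto simp: card_2_iff)
  then show ?thesis using that assms \<open>e \<subseteq> V\<close> by (cases "x = a") (auto simp: insert_commute)
qed

lemma Muniq: "u \<in> V - {v} \<Longrightarrow> e \<in> M \<Longrightarrow> e' \<in> M \<Longrightarrow> u \<in> e \<Longrightarrow> u \<in> e' \<Longrightarrow> e = e'"
  using Mu by blast

lemma M_inside:
  assumes "alt vs" "e \<in> M" "y \<in> e" "y \<in> set vs"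
  shows "e \<subseteq> set vs"
proof -
  have yv: "y \<noteq> v" using Mv assms by auto
  then obtain w where w: "w \<in> set vs" "{y,w} \<in> M" using assms unfolding alt_def by blast
  have "y \<in> V" using assms unfolding alt_def by auto
  then have "e = {y,w}" using Muniq[of y e "{y,w}"] yv assms w by auto
  then show ?thesis using w assms by auto
qed

lemma extend:
  assumes "alt vs" "{last vs, x} \<in> E" "x \<notin> set vs"
  shows "\<exists>vs'. alt vs' \<and> length vs' = length vs + 2"
proof -
  have "{last vs, x} \<subseteq> V" using edgeE assms by auto
  then have xV: "x \<in> V" by auto
  have "v \<in> set vs" using assms unfolding alt_def by (auto intro: hd_in_set)
  then have xv: "x \<noteq> v" using assms by auto
  then obtain e where e: "e \<in> M" "x \<in> e" using Mu xV by blast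
  then obtain y where y: "e = {x,y}" "x \<noteq> y" "y \<in> V" by (rule Medge)
  have yn: "y \<notin> set vs"
  proof
    assume "y \<in> set vs"
    then have "e \<subseteq> set vs" using M_inside assms e y by auto
    then show False using e assms by auto
  qed
  let ?vs = "vs @ [x, y]"
  have ne: "vs \<noteq> []" using assms unfolding alt_def by auto
  have "pe ?vs = insert {x,y} (insert {last vs, x} (pe vs))"
    using pe_snoc[of "vs @ [x]" y] pe_snoc[of vs x] ne by simp
  moreover have "{x,y} \<in> E" using e y ME by auto
  ultimately have "pe ?vs \<subseteq> E" using assms unfolding alt_def by auto
  moreover have "\<forall>u\<in>set ?vs - {v}. \<exists>w\<in>set ?vs. {u,w} \<in> M"
  proof
    fix u assume u: "u \<in> set ?vs - {v}"
    show "\<exists>w\<in>set ?vs. {u,w} \<in> M"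
    proof (cases "u \<in> set vs")
      case True then show ?thesis using u assms unfolding alt_def by fastforce
    next
      case False
      then have "u = x \<or> u = y" using u by auto
      then show ?thesis using e y by (auto simp: insert_commute)
    qed
  qed
  ultimately have "alt ?vs" using assms xV y yn unfolding alt_def by auto
  then show ?thesis by auto
qed

lemma grow:
  "m \<le> k \<Longrightarrow> (\<exists>vs. alt vs \<and> length vs = 2*m+1) \<or>
     (\<exists>vs. alt vs \<and> length vs < 2*k+1 \<and> (\<forall>x. {last vs, x} \<in> E \<longrightarrow> x \<in> set vs))"
proof (induction m)
  case 0
  have "alt [v]" using vV by (auto simp: alt_def)
  then show ?case by auto
next
  case (Suc m)
  then have "(\<exists>vs. alt vs \<and> length vs = 2*m+1) \<or>
     (\<exists>vs. alt vs \<and> length vs < 2*k+1 \<and> (\<forall>x. {last vs, x} \<in> E \<longrightarrow> x \<in> set vs))" by auto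
  then show ?case
  proof
    assume "\<exists>vs. alt vs \<and> length vs = 2*m+1"
    then obtain vs where vs: "alt vs" "length vs = 2*m+1" by auto
    show ?case
    proof (cases "\<forall>x. {last vs, x} \<in> E \<longrightarrow> x \<in> set vs")
      case True then show ?thesis using vs Suc.prems by auto
    next
      case False
      then obtain x where "{last vs, x} \<in> E" "x \<notin> set vs" by auto
      then show ?thesis using extend[OF vs(1)] vs(2) by auto
    qed
  qed auto
qed


lemma factor:
  assumes alt: "alt vs" and len: "length vs = 2*k+1"
  shows "has_path_factor k V E"
proof -
  let ?P = "set vs"
  define F where "F = pe vs \<union> {e\<in>M. e \<inter> ?P = {}}"
  have FE: "F \<subseteq> E" using alt ME unfolding F_def alt_def by auto
  have ne: "vs \<noteq> []" and vP: "v \<in> ?P" and PV: "?P \<subseteq> V" using alt unfolding alt_def by (auto intro: hd_in_set)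
  have Mne: "e \<noteq> {}" if "e \<in> M" for e using that edgeE ME by fastforce
  have peP: "\<And>e. e \<in> pe vs \<Longrightarrow> e \<subseteq> ?P" by (rule pe_subset)
  have comp: "\<forall>C\<in>components V F. is_path_on 2 C {e \<in> F. e \<subseteq> C}
                          \<or> is_path_on (2*k+1) C {e \<in> F. e \<subseteq> C}"
  proof
    fix C assume "C \<in> components V F"
    then obtain x where xV: "x \<in> V" and C: "C = {y \<in> V. (adj F)\<^sup>*\<^sup>* x y}"
      unfolding components_def by auto
    show "is_path_on 2 C {e \<in> F. e \<subseteq> C} \<or> is_path_on (2*k+1) C {e \<in> F. e \<subseteq> C}"
    proof (cases "x \<in> ?P")
      case True
      have "C \<subseteq> ?P"
      proof
        fix y assume "y \<in> C"
        then have "(adj F)\<^sup>*\<^sup>* x y" using C by auto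
        then show "y \<in> ?P"
        proof (rule reach_closed)
          show "x \<in> ?P" by fact
          fix a b assume "a \<in> ?P" "adj F a b"
          then show "b \<in> ?P" using peP unfolding adj_def F_def by auto
        qed
      qed
      moreover have "?P \<subseteq> C"
      proof
        fix p assume p: "p \<in> ?P"
        have mono: "(\<lambda>a b. {a,b} \<in> pe vs)\<^sup>*\<^sup>* u w \<Longrightarrow> (adj F)\<^sup>*\<^sup>* u w" for u w
          by (rule rtranclp_mono[THEN predicate2D, rotated]) (auto simp: adj_def F_def)
        have "(adj F)\<^sup>*\<^sup>* (hd vs) p" using mono pe_conn[OF ne p] by blast
        moreover have "(adj F)\<^sup>*\<^sup>* (hd vs) x" using mono pe_conn[OF ne True] by blast
        ultimately have "(adj F)\<^sup>*\<^sup>* x p" using adj_sym_rtrancl rtranclp_trans by metis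
        then show "p \<in> C" using C p PV by auto
      qed
      ultimately have CP: "C = ?P" by auto
      have "{e \<in> F. e \<subseteq> C} = pe vs"
        using CP peP Mne unfolding F_def by (auto simp: Int_absorb2)
      then have "is_path_on (2*k+1) C {e \<in> F. e \<subseteq> C}"
        unfolding is_path_on_def using CP alt len pe_nth[of vs] unfolding alt_def by auto
      then show ?thesis by auto
    next
      case False
      have xv: "x \<noteq> v" using False vP by auto
      then obtain e where e: "e \<in> M" "x \<in> e" using Mu xV by blast
      then obtain y where y: "e = {x,y}" "x \<noteq> y" "y \<in> V" by (rule Medge)
      have eP: "e \<inter> ?P = {}"
      proof (rule ccontr)
        assume "e \<inter> ?P \<noteq> {}"
        then obtain z where "z \<in> e" "z \<in> ?P" by auto
        then have "e \<subseteq> ?P" using M_inside[OF alt e(1)] by auto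
        then show False using e False by auto
      qed
      have eF: "e \<in> F" using e eP unfolding F_def by auto
      have eV: "e \<subseteq> V - {v}" using y xV Mv[OF e(1)] by auto
      have "C \<subseteq> e"
      proof
        fix z assume "z \<in> C"
        then have "(adj F)\<^sup>*\<^sup>* x z" using C by auto
        then show "z \<in> e"
        proof (rule reach_closed)
          show "x \<in> e" by fact
          fix a b assume a: "a \<in> e" "adj F a b"
          then have "{a,b} \<in> F" unfolding adj_def by auto
          then show "b \<in> e"
            unfolding F_def
          proof
            assume "{a,b} \<in> pe vs" then show ?thesis using peP a eP by auto
          next
            assume "{a,b} \<in> {e\<in>M. e \<inter> ?P = {}}"
            then have "{a,b} = e" using Muniq[of a "{a,b}" e] a eV e by auto
            then show ?thesis by auto
          qed
        qed
      qed
      moreover have "e \<subseteq> C"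
      proof -
        have "adj F x y" using eF y unfolding adj_def by auto
        then show ?thesis using C y xV by auto
      qed
      ultimately have Ce: "C = e" by auto
      have "{e' \<in> F. e' \<subseteq> C} = {e}"
      proof (rule set_eqI, rule iffI)
        fix e' assume "e' \<in> {e' \<in> F. e' \<subseteq> C}"
        then have e': "e' \<in> F" "e' \<subseteq> e" using Ce by auto
        show "e' \<in> {e}"
        proof (cases "e' \<in> pe vs")
          case True
          then show ?thesis using peP e' eP pe_nth[of vs] by fastforce
        next
          case False
          then have "e' \<in> M" using e' unfolding F_def by auto
          moreover obtain w where "w \<in> e'" using Mne \<open>e' \<in> M\<close> by auto
          ultimately show ?thesis using Muniq[of w e e'] e' eV e by auto
        qed
      qed (use eF Ce in auto)
      moreover have "is_path_on 2 e {e}"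
        unfolding is_path_on_def
        by (rule exI[of _ "[x,y]"]) (use y in \<open>auto simp: less_Suc_eq\<close>)
      ultimately show ?thesis using Ce by auto
    qed
  qed
  show ?thesis unfolding has_path_factor_def using FE comp by blast
qed

end

lemma final:
  fixes k :: nat and V :: "'a set" and E :: "'a set set"
  assumes sg: "simple_graph V E" and bV: "b \<in> V" and bX: "b \<notin> X" and XV: "X \<subseteq> V"
    and nb: "\<And>z. {b,z} \<in> E \<Longrightarrow> z \<in> X \<or> z = b"
    and c5: "5 \<le> card X" and ck: "card X \<le> k^2" and k1: "k \<ge> 1"
  shows "\<exists>X. X \<subseteq> V \<and> card X \<ge> 5 \<and>
     real (\<Sum>j<k. comp_count (2*j+1) (V - X) (del_verts_E X E)) \<ge> real (card X) / real (k^2)"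
proof -
  let ?E' = "del_verts_E X E"
  have reach: "y = b" if "(adj ?E')\<^sup>*\<^sup>* b y" for y
    using that
  proof (cases rule: converse_rtranclpE)
    case (step z)
    then have bz: "{b,z} \<in> E" "{b,z} \<inter> X = {}" unfolding adj_def del_verts_E_def by auto
    have "card {b,z} = 2" using bz sg unfolding simple_graph_def by auto
    then have "z \<noteq> b" by auto
    then have "z \<in> X" using nb bz by auto
    then show ?thesis using bz by auto
  qed auto
  have "{y \<in> V - X. (adj ?E')\<^sup>*\<^sup>* b y} = {b}" using reach bV bX by auto
  then have bC: "{b} \<in> components (V - X) ?E'" unfolding components_def using bV bX by blast
  have finV: "finite V" using sg unfolding simple_graph_def by auto
  have "components (V - X) ?E' \<subseteq> Pow (V - X)" unfolding components_def by auto
  then have "finite (components (V - X) ?E')" using finV by (simp add: finite_subset)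
  then have "finite {C \<in> components (V - X) ?E'. card C = 1}" by auto
  moreover have "{b} \<in> {C \<in> components (V - X) ?E'. card C = 1}" using bC by auto
  ultimately have "1 \<le> comp_count 1 (V - X) ?E'" unfolding comp_count_def
    by (metis (no_types, lifting) One_nat_def Suc_leI card_gt_0_iff empty_iff)
  moreover have "comp_count (2*0+1) (V - X) ?E' \<le> (\<Sum>j<k. comp_count (2*j+1) (V - X) ?E')"
    by (rule member_le_sum) (use k1 in auto)
  ultimately have s1: "1 \<le> (\<Sum>j<k. comp_count (2*j+1) (V - X) ?E')" by simp
  have kpos: "real (k^2) > 0" using k1 by auto
  have "real (card X) / real (k^2) \<le> 1" using ck kpos by (simp add: divide_le_eq)
  also have "\<dots> \<le> real (\<Sum>j<k. comp_count (2*j+1) (V - X) ?E')" using s1 by linarith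
  finally show ?thesis using XV c5 by blast
qed

theorem proposition3p1:
  fixes k :: nat and V :: "'a set" and E :: "'a set set"
  assumes "k \<ge> 3"
    and "simple_graph V E"
    and "hypomatchable V E"
    and "card V \<ge> 2*k+1"
    and "\<not> has_path_factor k V E"
  shows "\<exists>X. X \<subseteq> V \<and> card X \<ge> 5 \<and>
     real (\<Sum>j<k. comp_count (2*j+1) (V - X) (del_verts_E X E)) \<ge> real (card X) / real (k^2)"
proof -
  have finV: "finite V" using assms(2) unfolding simple_graph_def by auto
  have "V \<noteq> {}" using assms(4) by auto
  then obtain v where vV: "v \<in> V" by auto
  then obtain M where M: "perfect_matching (V - {v}) (del_verts_E {v} E) M"
    using assms(3) unfolding hypomatchable_def by auto
  interpret hm V E M v
  proof
    show "simple_graph V E" by fact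
    show "v \<in> V" by fact
    show "M \<subseteq> E" using M unfolding perfect_matching_def del_verts_E_def by auto
    show "\<And>e. e \<in> M \<Longrightarrow> v \<notin> e" using M unfolding perfect_matching_def del_verts_E_def by auto
    show "\<And>u. u \<in> V - {v} \<Longrightarrow> \<exists>!e. e \<in> M \<and> u \<in> e" using M unfolding perfect_matching_def by auto
  qed
  from grow[of k k] have
    "(\<exists>vs. alt vs \<and> length vs = 2*k+1) \<or>
     (\<exists>vs. alt vs \<and> length vs < 2*k+1 \<and> (\<forall>x. {last vs, x} \<in> E \<longrightarrow> x \<in> set vs))" by simp
  moreover have "\<not> (\<exists>vs. alt vs \<and> length vs = 2*k+1)" using factor assms(5) by blast
  ultimately obtain vs where vs: "alt vs" "length vs < 2*k+1" "\<forall>x. {last vs, x} \<in> E \<longrightarrow> x \<in> set vs"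
    by blast
  define b where "b = last vs"
  have ne: "vs \<noteq> []" and sV: "set vs \<subseteq> V" using vs unfolding alt_def by auto
  have bV: "b \<in> V" using ne sV unfolding b_def by auto
  let ?Q = "set vs - {b}"
  have cQ: "card ?Q \<le> 2*k" using card_length[of vs] vs(2) using card_Diff1_le[of "set vs" b] by linarith
  have nb: "\<And>z. {b,z} \<in> E \<Longrightarrow> z \<in> ?Q \<or> z = b" using vs(3) unfolding b_def by auto
  have k2: "2*k \<le> k^2" using assms(1) by (simp add: power2_eq_square)
  show ?thesis
  proof (cases "5 \<le> card ?Q")
    case True
    show ?thesis
      by (rule final[of V E b ?Q]) (use assms(2) bV sV nb True cQ k2 assms(1) in auto)
  next
    case False
    have k9: "9 \<le> k^2" using mult_le_mono[OF assms(1) assms(1)] by (simp add: power2_eq_square)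
    have "card (V - {b}) \<ge> 5" using assms(4) assms(1) bV finV by auto
    then obtain T where T: "T \<subseteq> V - {b}" "card T = 5" using obtain_subset_with_card_n by metis
    have fT: "finite T" using T finV by (simp add: finite_subset)
    have "card (?Q \<union> T) \<le> card ?Q + card T" by (rule card_Un_le)
    also have "\<dots> \<le> k^2" using False T k9 by linarith
    finally have c1: "card (?Q \<union> T) \<le> k^2" .
    have "card T \<le> card (?Q \<union> T)" using fT by (intro card_mono) auto
    then have c2: "5 \<le> card (?Q \<union> T)" using T by auto
    show ?thesis
      by (rule final[of V E b "?Q \<union> T"]) (use assms(2) bV sV nb T c1 c2 assms(1) in auto)
  qed
qed
end
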